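(* Let $\alpha,\beta>-1$, $M\ge0$, $a_0,\dots,a_M\in\mathbb{R}$ and $f_M(x)=\sum_{m=0}^M a_mP^{(\alpha,\beta)}_m(x)$. For integers $n\ge-1$ and $y\in[-1,1]$ let $\tilde R_n(y)=\int_{-1}^{y}f_M(y-1-t)P^{(\alpha,\beta)}_n(t)\,\mathrm{d}t$ (so $\tilde R_{-1}\equiv0$). Then for every integer $n\ge0$ and $y\in[-1,1]$, $$\tilde R_{n+1}(y)=\frac{1}{A_{n+1}}\int_{-1}^{y}\tilde R_n(s)\,\mathrm{d}s-\frac{B_n}{A_{n+1}}\tilde R_n(y)-\frac{C_{n-1}}{A_{n+1}}\tilde R_{n-1}(y)+\frac{S_n}{A_{n+1}}\int_{-1}^{y}f_M(t)\,\mathrm{d}t,$$ where $$S_n=\frac{2(-1)^{n+1}(\beta)_{n+1}}{(\alpha+\beta+n)(n+1)!}$$ (and the term $C_{n-1}\tilde R_{n-1}$ is $0$ when $n=0$).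
   Context: Jacobi polynomials: $P^{(\alpha,\beta)}_n(x)=\frac{(\alpha+1)_n}{n!}\,{}_2F_1\!\left(-n,\,n+\alpha+\beta+1;\,\alpha+1;\,\frac{1-x}{2}\right)$ for $n\ge0$, $P^{(\alpha,\beta)}_n:=0$ for $n<0$; $(a)_n=a(a+1)\cdots(a+n-1)$, $(a)_0=1$. The constants are $A_{m}=\dfrac{2(\alpha+\beta+m)}{(\alpha+\beta+2m-1)(\alpha+\beta+2m)}$, $B_m=\dfrac{2(\alpha-\beta)}{(\alpha+\beta+2m)(\alpha+\beta+2m+2)}$, $C_m=-\dfrac{2(\alpha+m+1)(\beta+m+1)}{(\alpha+\beta+m+1)(\alpha+\beta+2m+2)(\alpha+\beta+2m+3)}$; they satisfy $P^{(\alpha,\beta)}_n=A_{n+1}\frac{\mathrm d}{\mathrm dx}P^{(\alpha,\beta)}_{n+1}+B_n\frac{\mathrm d}{\mathrm dx}P^{(\alpha,\beta)}_n+C_{n-1}\frac{\mathrm d}{\mathrm dx}P^{(\alpha,\beta)}_{n-1}$. $\tilde R_n(y)$ is the convolution $\int_{-1}^{x+1}f_M(x-t)P^{(\alpha,\beta)}_n(t)\,\mathrm dt$ at $x=y-1$. *)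

theory Defs
  imports "HOL-Analysis.Analysis"
begin

text \<open>Jacobi polynomial via the terminating hypergeometric series
  (alpha+1)_n / n! * 2F1(-n, n+alpha+beta+1; alpha+1; (1-x)/2), and 0 for n < 0.\<close>
definition jacobiP :: "real \<Rightarrow> real \<Rightarrow> int \<Rightarrow> real \<Rightarrow> real" where
  "jacobiP \<alpha> \<beta> n x =
     (if n < 0 then 0 else
        pochhammer (\<alpha> + 1) (nat n) / fact (nat n) *
        (\<Sum>k\<le>nat n. pochhammer (- real (nat n)) k * pochhammer (real (nat n) + \<alpha> + \<beta> + 1) k
                      / (pochhammer (\<alpha> + 1) k * fact k) * ((1 - x) / 2) ^ k))"

definition jacA :: "real \<Rightarrow> real \<Rightarrow> int \<Rightarrow> real" where
  "jacA \<alpha> \<beta> m = 2 * (\<alpha> + \<beta> + of_int m) /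
     ((\<alpha> + \<beta> + 2 * of_int m - 1) * (\<alpha> + \<beta> + 2 * of_int m))"

definition jacB :: "real \<Rightarrow> real \<Rightarrow> int \<Rightarrow> real" where
  "jacB \<alpha> \<beta> m = 2 * (\<alpha> - \<beta>) /
     ((\<alpha> + \<beta> + 2 * of_int m) * (\<alpha> + \<beta> + 2 * of_int m + 2))"

definition jacC :: "real \<Rightarrow> real \<Rightarrow> int \<Rightarrow> real" where
  "jacC \<alpha> \<beta> m = - (2 * (\<alpha> + of_int m + 1) * (\<beta> + of_int m + 1)) /
     ((\<alpha> + \<beta> + of_int m + 1) * (\<alpha> + \<beta> + 2 * of_int m + 2) * (\<alpha> + \<beta> + 2 * of_int m + 3))"

definition jacS :: "real \<Rightarrow> real \<Rightarrow> nat \<Rightarrow> real" where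
  "jacS \<alpha> \<beta> n = 2 * (-1) ^ (n + 1) * pochhammer \<beta> (n + 1) /
     ((\<alpha> + \<beta> + real n) * fact (n + 1))"

definition jacobi_sum :: "real \<Rightarrow> real \<Rightarrow> (nat \<Rightarrow> real) \<Rightarrow> nat \<Rightarrow> real \<Rightarrow> real" where
  "jacobi_sum \<alpha> \<beta> a M x = (\<Sum>m\<le>M. a m * jacobiP \<alpha> \<beta> (int m) x)"

definition Rtilde :: "real \<Rightarrow> real \<Rightarrow> (real \<Rightarrow> real) \<Rightarrow> int \<Rightarrow> real \<Rightarrow> real" where
  "Rtilde \<alpha> \<beta> f n y = integral {-1..y} (\<lambda>t. f (y - 1 - t) * jacobiP \<alpha> \<beta> n t)"

end

theory Submission
  imports Defs "HOL-Computational_Algebra.Polynomial" "HOL-Computational_Algebra.Formal_Power_Series"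
begin


lemma sep_deriv:
  fixes g gx :: "real \<Rightarrow> real \<Rightarrow> real"
  assumes I: "finite I"
    and sep: "\<And>y t. g y t = (\<Sum>i\<in>I. u i y * w i t)"
    and du: "\<And>i y. (u i has_real_derivative u' i y) (at y)"
    and cw: "\<And>i. continuous_on UNIV (w i)"
    and dg: "\<And>y t. ((\<lambda>y. g y t) has_real_derivative gx y t) (at y)"
    and y: "y \<in> {a..b}"
  shows "((\<lambda>y. integral {a..y} (g y)) has_real_derivative (g y y + integral {a..y} (gx y))) (at y within {a..b})"
proof -
  have intw: "w i integrable_on {a..z}" for i z
    by (rule integrable_continuous_interval) (rule continuous_on_subset[OF cw], simp)
  have eq: "integral {a..z} (g z) = (\<Sum>i\<in>I. u i z * integral {a..z} (w i))" for z
  proof -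
    have "integral {a..z} (g z) = integral {a..z} (\<lambda>t. \<Sum>i\<in>I. u i z * w i t)"
      by (simp add: sep[abs_def])
    also have "\<dots> = (\<Sum>i\<in>I. integral {a..z} (\<lambda>t. u i z * w i t))"
      by (rule integral_sum[OF I]) (auto intro!: integrable_continuous_interval continuous_intros continuous_on_subset[OF cw])
    also have "\<dots> = (\<Sum>i\<in>I. u i z * integral {a..z} (w i))"
      by simp
    finally show ?thesis .
  qed
  have gxe: "gx z t = (\<Sum>i\<in>I. u' i z * w i t)" for z t
  proof -
    have "((\<lambda>y. g y t) has_real_derivative (\<Sum>i\<in>I. u' i z * w i t)) (at z)"
      unfolding sep
      by (auto intro!: derivative_eq_intros du)
    then show ?thesis using dg DERIV_unique by blast
  qed
  have eq2: "integral {a..y} (gx y) = (\<Sum>i\<in>I. u' i y * integral {a..y} (w i))"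
  proof -
    have "integral {a..y} (gx y) = integral {a..y} (\<lambda>t. \<Sum>i\<in>I. u' i y * w i t)"
      by (simp add: gxe[abs_def])
    also have "\<dots> = (\<Sum>i\<in>I. integral {a..y} (\<lambda>t. u' i y * w i t))"
      by (rule integral_sum[OF I]) (auto intro!: integrable_continuous_interval continuous_intros continuous_on_subset[OF cw])
    also have "\<dots> = (\<Sum>i\<in>I. u' i y * integral {a..y} (w i))"
      by simp
    finally show ?thesis .
  qed
  have cwab: "continuous_on {a..b} (w i)" for i
    by (rule continuous_on_subset[OF cw], simp)
  have "((\<lambda>z. \<Sum>i\<in>I. u i z * integral {a..z} (w i)) has_real_derivative
      (\<Sum>i\<in>I. u' i y * integral {a..y} (w i) + u i y * w i y)) (at y within {a..b})"
    by (rule DERIV_sum, rule DERIV_mult[THEN DERIV_cong])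
       (auto intro: has_field_derivative_at_within du integral_has_real_derivative[OF cwab y])
  moreover have "(\<Sum>i\<in>I. u' i y * integral {a..y} (w i) + u i y * w i y) = g y y + integral {a..y} (gx y)"
    by (simp add: sum.distrib eq2 sep)
  ultimately show ?thesis unfolding eq by simp
qed

lemma poly_shift_sep:
  fixes p :: "real poly"
  shows "poly p (y + z) = (\<Sum>(k,i)\<in>Sigma {..degree p} (\<lambda>k. {..k}).
            (coeff p k * of_nat (k choose i) * y ^ i) * z ^ (k - i))"
proof -
  have "poly p (y + z) = (\<Sum>k\<le>degree p. coeff p k * (y + z) ^ k)"
    by (simp add: poly_altdef)
  also have "\<dots> = (\<Sum>k\<le>degree p. \<Sum>i\<le>k. coeff p k * of_nat (k choose i) * y ^ i * z ^ (k - i))"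
    by (simp add: binomial_ring sum_distrib_left mult.assoc)
  also have "\<dots> = (\<Sum>(k,i)\<in>Sigma {..degree p} (\<lambda>k. {..k}).
            (coeff p k * of_nat (k choose i) * y ^ i) * z ^ (k - i))"
    by (subst sum.Sigma) auto
  finally show ?thesis .
qed

lemma conv_deriv:
  fixes p :: "real poly" and h :: "real \<Rightarrow> real"
  assumes ch: "continuous_on UNIV h" and y: "y \<in> {a..b}"
  shows "((\<lambda>y. integral {a..y} (\<lambda>t. poly p (y - 1 - t) * h t)) has_real_derivative
     (poly p (- 1) * h y + integral {a..y} (\<lambda>t. poly (pderiv p) (y - 1 - t) * h t))) (at y within {a..b})"
proof -
  let ?I = "Sigma {..degree p} (\<lambda>k. {..k})"
  have "((\<lambda>y. integral {a..y} ((\<lambda>y t. poly p (y - 1 - t) * h t) y)) has_real_derivative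
     ((\<lambda>y t. poly p (y - 1 - t) * h t) y y + integral {a..y} ((\<lambda>y t. poly (pderiv p) (y - 1 - t) * h t) y))) (at y within {a..b})"
  proof (rule sep_deriv[where I = ?I and u = "\<lambda>(k,i) y. coeff p k * of_nat (k choose i) * y ^ i"
        and w = "\<lambda>(k,i) t. (- 1 - t) ^ (k - i) * h t"
        and u' = "\<lambda>(k,i) y. coeff p k * of_nat (k choose i) * (of_nat i * y ^ (i - 1))"])
    show "finite ?I" by auto
    show "poly p (y - 1 - t) * h t = (\<Sum>i\<in>?I. (case i of (k,i) \<Rightarrow> \<lambda>y. coeff p k * of_nat (k choose i) * y ^ i) y *
        (case i of (k, i) \<Rightarrow> \<lambda>t. (- 1 - t) ^ (k - i) * h t) t)" for y t
    proof -
      have "poly p (y - 1 - t) = poly p (y + (- 1 - t))" by (simp add: algebra_simps)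
      then show ?thesis
        unfolding poly_shift_sep by (simp add: sum_distrib_right split_beta mult.assoc)
    qed
    show "((case i of (k,i) \<Rightarrow> \<lambda>y. coeff p k * of_nat (k choose i) * y ^ i) has_real_derivative
          (case i of (k,i) \<Rightarrow> \<lambda>y. coeff p k * of_nat (k choose i) * (of_nat i * y ^ (i - 1))) y) (at y)" for i y
      by (cases i) (auto intro!: derivative_eq_intros)
    show "continuous_on UNIV (case i of (k, i) \<Rightarrow> \<lambda>t. (- 1 - t) ^ (k - i) * h t)" for i
      by (cases i) (auto intro!: continuous_intros ch)
    show "((\<lambda>y. poly p (y - 1 - t) * h t) has_real_derivative poly (pderiv p) (y - 1 - t) * h t) (at y)" for y t
      by (auto intro!: derivative_eq_intros poly_DERIV[THEN DERIV_chain2])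
  qed (rule y)
  then show ?thesis by simp
qed

lemma conv_main:
  fixes p :: "real poly" and Q P :: "real \<Rightarrow> real"
  assumes dQ: "\<And>t. (Q has_real_derivative P t) (at t)"
    and cP: "continuous_on UNIV P" and y: "y \<in> {-1..1}"
  shows "integral {-1..y} (\<lambda>t. poly p (y - 1 - t) * Q t) =
     integral {-1..y} (\<lambda>s. integral {-1..s} (\<lambda>t. poly p (s - 1 - t) * P t))
     + Q (-1) * integral {-1..y} (poly p)"
proof -
  define GQ where "GQ z = integral {-1..z} (\<lambda>t. poly p (z - 1 - t) * Q t)" for z
  define GP where "GP z = integral {-1..z} (\<lambda>t. poly p (z - 1 - t) * P t)" for z
  define D where "D z = GQ z - (integral {-1..z} GP + Q (-1) * integral {-1..z} (poly p))" for z
  have cQ: "continuous_on UNIV Q"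
    by (rule DERIV_continuous_on[where D=P]) (auto intro: has_field_derivative_at_within dQ)
  have dGP: "(GP has_real_derivative (poly p (- 1) * P z + integral {-1..z} (\<lambda>t. poly (pderiv p) (z - 1 - t) * P t))) (at z within {-1..1})"
    if "z \<in> {-1..1}" for z
    unfolding GP_def by (rule conv_deriv[OF cP that])
  have cGP: "continuous_on {-1..1} GP"
    by (rule DERIV_continuous_on) (rule dGP)
  have dGQ: "(GQ has_real_derivative (poly p (- 1) * Q z + integral {-1..z} (\<lambda>t. poly (pderiv p) (z - 1 - t) * Q t))) (at z within {-1..1})"
    if "z \<in> {-1..1}" for z
    unfolding GQ_def by (rule conv_deriv[OF cQ that])
  have parts: "integral {-1..z} (\<lambda>t. poly (pderiv p) (z - 1 - t) * Q t)
      = - (poly p (-1) * Q z - poly p z * Q (-1) - GP z)" if z: "z \<in> {-1..1}" for z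
  proof -
    have "((\<lambda>t. (- poly (pderiv p) (z - 1 - t)) * Q t) has_integral
         (poly p (z - 1 - z) * Q z - poly p (z - 1 - (-1)) * Q (-1) - GP z)) {-1..z}"
    proof (rule integration_by_parts[where prod = "(*)" and f = "\<lambda>t. poly p (z - 1 - t)" and f' = "\<lambda>t. - poly (pderiv p) (z - 1 - t)" and g = Q and g' = P])
      show "bounded_bilinear ((*) :: real \<Rightarrow> real \<Rightarrow> real)" by (rule bounded_bilinear_mult)
      show "-1 \<le> z" using z by simp
      show "continuous_on {-1..z} (\<lambda>t. poly p (z - 1 - t))" by (auto intro!: continuous_intros)
      show "continuous_on {-1..z} Q" using cQ by (rule continuous_on_subset) simp
      show "((\<lambda>t. poly p (z - 1 - t)) has_vector_derivative - poly (pderiv p) (z - 1 - x)) (at x)" if "x \<in> {-1..z}" for x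
        unfolding has_real_derivative_iff_has_vector_derivative[symmetric]
        by (auto intro!: derivative_eq_intros poly_DERIV[THEN DERIV_chain2])
      show "(Q has_vector_derivative P x) (at x)" if "x \<in> {-1..z}" for x
        using dQ has_real_derivative_iff_has_vector_derivative by blast
      have "((\<lambda>t. poly p (z - 1 - t) * P t) has_integral GP z) {-1..z}"
        unfolding GP_def
        by (rule integrable_integral, rule integrable_continuous_interval)
           (auto intro!: continuous_intros continuous_on_subset[OF cP])
      then show "((\<lambda>x. poly p (z - 1 - x) * P x) has_integral
          poly p (z - 1 - z) * Q z - poly p (z - 1 - - 1) * Q (- 1) -
          (poly p (z - 1 - z) * Q z - poly p (z - 1 - - 1) * Q (- 1) - GP z)) {- 1..z}"
        by simp
    qed
    from has_integral_neg[OF this]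
    have "((\<lambda>t. poly (pderiv p) (z - 1 - t) * Q t) has_integral
         - (poly p (-1) * Q z - poly p z * Q (-1) - GP z)) {-1..z}"
      by simp
    then show ?thesis by (rule integral_unique)
  qed
  have dD: "(D has_real_derivative 0) (at z within {-1..1})" if z: "z \<in> {-1..1}" for z
  proof -
    have cp: "continuous_on {-1..1} (poly p)" by (auto intro!: continuous_intros)
    have "(D has_real_derivative ((poly p (- 1) * Q z + integral {-1..z} (\<lambda>t. poly (pderiv p) (z - 1 - t) * Q t))
        - (GP z + Q (-1) * poly p z))) (at z within {-1..1})"
      unfolding D_def[abs_def]
      by (auto intro!: derivative_eq_intros dGQ[OF z] integral_has_real_derivative[OF cGP z]
          integral_has_real_derivative[OF cp z])
    then show ?thesis using parts[OF z] by (simp add: algebra_simps)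
  qed
  obtain c where c: "\<forall>z\<in>{-1..1}. D z = c"
    using has_field_derivative_zero_constant[of "{-1..1}" D] dD by auto
  have "D (-1) = 0" by (simp add: D_def GQ_def)
  then have "D y = 0" using c y by force
  then show ?thesis by (simp add: D_def GQ_def GP_def[abs_def])
qed



lemma PI:
  fixes a b r j :: real
  shows "(a+1+j)*(a+b+2*r)*(a+b+2*r+1)*(a+b+2*r+2) = (a+1+r)*(r+a+b+1+j)*(r+a+b+1+1+j)*(a+b+2*r) - (a-b)*(j-r)*(r+a+b+1+j)*(a+b+2*r+1) - (b+r)*(j-r)*(j-r+1)*(a+b+2*r+2)"
  by algebra

definition jc :: "real \<Rightarrow> real \<Rightarrow> nat \<Rightarrow> nat \<Rightarrow> real" where
  "jc \<alpha> \<beta> m k = pochhammer (\<alpha> + 1) m / fact m *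
     (pochhammer (- real m) k * pochhammer (real m + \<alpha> + \<beta> + 1) k / (pochhammer (\<alpha> + 1) k * fact k))"

lemma coef_rec:
  fixes a b :: real and m j :: nat
  assumes a: "a > -1" and b: "b > -1" and L0: "m = 0 \<Longrightarrow> a + b + 1 \<noteq> 0"
  shows "jc a b (Suc m) j = - (real j + 1) / 2 * (jacA a b (int (Suc m) + 1) * jc a b (Suc (Suc m)) (Suc j)
     + jacB a b (int (Suc m)) * jc a b (Suc m) (Suc j) + jacC a b (int (Suc m) - 1) * jc a b m (Suc j))"
proof -
  define r where "r = real (Suc m)"
  define L where "L = a + b + 1"
  define X0 where "X0 = pochhammer (a + 1) m"
  define F0 where "F0 = (fact m :: real)"
  define Y where "Y = pochhammer (- r) j"
  define Z where "Z = pochhammer (r + L) j"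
  define W where "W = pochhammer (a + 1) j"
  define G where "G = (fact j :: real)"
  define Ar where "Ar = a + r"
  define Ar1 where "Ar1 = a + 1 + r"
  define RL where "RL = r + L"
  define Rj where "Rj = r + L + real j"
  define Rj1 where "Rj1 = r + L + 1 + real j"
  define Aj where "Aj = a + 1 + real j"
  define J1 where "J1 = real j + 1"
  define Jr where "Jr = real j - r"
  define Jr1 where "Jr1 = real j - r + 1"
  define R1 where "R1 = r + 1"
  define SR where "SR = a + b + r"
  define S0 where "S0 = a + b + 2 * r"
  define S1 where "S1 = a + b + 2 * r + 1"
  define S2 where "S2 = a + b + 2 * r + 2"
  define AB where "AB = a - b"
  define Br where "Br = b + r"
  have r1: "r \<ge> 1" by (simp add: r_def)
  have r2: "r \<noteq> 1 \<Longrightarrow> r \<ge> 2" by (auto simp: r_def)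
  have nz: "r \<noteq> 0" "RL \<noteq> 0" "Ar \<noteq> 0" "Aj \<noteq> 0" "J1 \<noteq> 0" "R1 \<noteq> 0"
      "S0 \<noteq> 0" "S1 \<noteq> 0" "S2 \<noteq> 0"
    using a b r1 unfolding RL_def L_def Ar_def Aj_def J1_def R1_def S0_def S1_def S2_def by linarith+
  have nzSR: "SR \<noteq> 0"
  proof (cases "m = 0")
    case True then show ?thesis using L0 by (simp add: SR_def r_def add.commute add.left_commute)
  next
    case False then have "r \<ge> 2" by (simp add: r_def)
    then show ?thesis using a b unfolding SR_def by linarith
  qed
  have X0: "X0 \<noteq> 0" unfolding X0_def using a by (auto simp: pochhammer_eq_0_iff)
  have W: "W \<noteq> 0" unfolding W_def using a by (auto simp: pochhammer_eq_0_iff)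
  have F0: "F0 \<noteq> 0" "G \<noteq> 0" by (simp_all add: F0_def G_def)
  have p1: "pochhammer (a + 1) (Suc m) = X0 * Ar"
    by (simp add: pochhammer_Suc X0_def Ar_def r_def algebra_simps)
  have p2: "pochhammer (a + 1) (Suc (Suc m)) = X0 * Ar * Ar1"
    by (simp only: pochhammer_Suc[of _ "Suc m"] p1) (simp add: r_def Ar1_def algebra_simps)
  have f1: "(fact (Suc m) :: real) = r * F0" by (simp add: F0_def r_def)
  have f2: "(fact (Suc (Suc m)) :: real) = R1 * (r * F0)" by (simp add: F0_def r_def R1_def)
  have g1: "(fact (Suc j) :: real) = J1 * G" by (simp add: G_def J1_def)
  have w1: "pochhammer (a + 1) (Suc j) = W * Aj" by (simp add: W_def pochhammer_Suc Aj_def)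
  have y0: "pochhammer (- real (Suc m)) j = Y" by (simp add: Y_def r_def)
  have z0': "pochhammer (real (Suc m) + a + b + 1) j = Z" by (simp add: Z_def r_def L_def add.assoc)
  have y1: "pochhammer (- real (Suc (Suc m))) (Suc j) = - R1 * Y"
    by (simp add: pochhammer_rec Y_def r_def R1_def algebra_simps)
  have y2: "pochhammer (- real (Suc m)) (Suc j) = Y * Jr"
    by (simp add: pochhammer_Suc Y_def r_def Jr_def algebra_simps)
  have y3: "pochhammer (- real m) (Suc j) = Y * Jr / (- r) * Jr1"
  proof -
    have "pochhammer (- real (Suc m)) (Suc j) = - r * pochhammer (- real m) j"
      by (simp add: pochhammer_rec r_def algebra_simps)
    then have "pochhammer (- real m) j = Y * Jr / (- r)"
      using y2 r1 by (simp add: field_simps)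
    then show ?thesis by (simp add: pochhammer_Suc r_def Jr1_def algebra_simps)
  qed
  have z0: "pochhammer (r + L + 1) j = Z * Rj / RL"
  proof -
    have "pochhammer (r + L) (Suc j) = (r + L) * pochhammer (r + L + 1) j" by (rule pochhammer_rec)
    moreover have "pochhammer (r + L) (Suc j) = Z * Rj" by (simp add: pochhammer_Suc Z_def Rj_def)
    ultimately show ?thesis using nz by (simp add: field_simps RL_def)
  qed
  have z1: "pochhammer (real (Suc (Suc m)) + a + b + 1) (Suc j) = Z * Rj / RL * Rj1"
  proof -
    have e: "real (Suc (Suc m)) + a + b + 1 = r + L + 1" by (simp add: r_def L_def)
    have e2: "r + L + 1 + real j = Rj1" by (simp add: Rj1_def)
    show ?thesis by (simp only: e pochhammer_Suc z0 e2)
  qed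
  have z2: "pochhammer (real (Suc m) + a + b + 1) (Suc j) = Z * Rj"
    by (simp add: pochhammer_Suc Z_def r_def L_def Rj_def algebra_simps)
  have z3: "pochhammer (real m + a + b + 1) (Suc j) = SR * Z"
  proof -
    have e: "real m + a + b + 1 = SR" "SR + 1 = r + L" by (simp_all add: r_def L_def SR_def)
    show ?thesis unfolding e(1) pochhammer_rec e(2) Z_def ..
  qed
  define K2 where "K2 = X0 * Y * Z / (F0 * W * G) * Ar / (r * (Aj * J1))"
  have c0: "jc a b (Suc m) j = K2 * (Aj * J1)"
    unfolding jc_def p1 f1 y0 z0' K2_def X0_def[symmetric] W_def[symmetric] G_def[symmetric]
    using nz X0 W F0 by (simp add: field_simps)
  have c1: "jc a b (Suc (Suc m)) (Suc j) = K2 * (- (Ar1 * Rj * Rj1) / RL)"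
    unfolding jc_def p2 f2 y1 z1 w1 g1 K2_def
    using nz X0 W F0 by (simp add: field_simps)
  have c2: "jc a b (Suc m) (Suc j) = K2 * (Jr * Rj)"
    unfolding jc_def p1 f1 y2 z2 w1 g1 K2_def
    using nz X0 W F0 by (simp add: field_simps)
  have c3: "jc a b m (Suc j) = K2 * (Jr * Jr1 * SR / (- Ar))"
    unfolding jc_def y3 z3 w1 g1 X0_def[symmetric] F0_def[symmetric] K2_def
    using nz X0 W F0 by (simp add: field_simps)
  have hA: "jacA a b (int (Suc m) + 1) = 2 * RL / (S1 * S2)"
    unfolding jacA_def RL_def S1_def S2_def r_def L_def by (simp add: algebra_simps)
  have hB: "jacB a b (int (Suc m)) = 2 * AB / (S0 * S2)"
    unfolding jacB_def AB_def S0_def S2_def r_def by (simp add: algebra_simps)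
  have hC: "jacC a b (int (Suc m) - 1) = - (2 * Ar * Br) / (SR * S0 * S1)"
    unfolding jacC_def Ar_def Br_def SR_def S0_def S1_def r_def by (simp add: algebra_simps)
  have PIa: "Aj * S0 * S1 * S2 = Ar1 * Rj * Rj1 * S0 - AB * Jr * Rj * S1 - Br * Jr * Jr1 * S2"
    unfolding Aj_def S0_def S1_def S2_def Ar1_def Rj_def Rj1_def AB_def Jr_def Br_def Jr1_def L_def
    using PI[of a b r "real j"] by (simp add: algebra_simps)
  have sum: "2 * RL / (S1 * S2) * (- (Ar1 * Rj * Rj1) / RL) + 2 * AB / (S0 * S2) * (Jr * Rj)
      + - (2 * Ar * Br) / (SR * S0 * S1) * (Jr * Jr1 * SR / (- Ar))
      = - 2 * (Ar1 * Rj * Rj1 * S0 - AB * Jr * Rj * S1 - Br * Jr * Jr1 * S2) / (S0 * S1 * S2)"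
    using nz nzSR by (simp add: field_simps)
  also have "\<dots> = - 2 * Aj"
    unfolding PIa[symmetric] using nz by (simp add: field_simps)
  finally have sum2: "2 * RL / (S1 * S2) * (- (Ar1 * Rj * Rj1) / RL) + 2 * AB / (S0 * S2) * (Jr * Rj)
      + - (2 * Ar * Br) / (SR * S0 * S1) * (Jr * Jr1 * SR / (- Ar)) = - 2 * Aj" .
  have lin: "K * e0 = c * (A * (K * e1) + B * (K * e2) + C * (K * e3))"
    if "e0 = c * (A * e1 + B * e2 + C * e3)" for K e0 c A B C e1 e2 e3 :: real
    unfolding that by (simp add: algebra_simps)
  show ?thesis
    unfolding c0 c1 c2 c3 hA hB hC
  proof (rule lin)
    show "Aj * J1 = - (real j + 1) / 2 * (2 * RL / (S1 * S2) * (- (Ar1 * Rj * Rj1) / RL) + 2 * AB / (S0 * S2) * (Jr * Rj)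
      + - (2 * Ar * Br) / (SR * S0 * S1) * (Jr * Jr1 * SR / (- Ar)))"
      unfolding sum2 by (simp add: J1_def algebra_simps)
  qed
qed



lemma jacobiP_jc:
  assumes "m \<le> N"
  shows "jacobiP a b (int m) x = (\<Sum>k\<le>N. jc a b m k * ((1 - x) / 2) ^ k)"
proof -
  have "jacobiP a b (int m) x = (\<Sum>k\<le>m. jc a b m k * ((1 - x) / 2) ^ k)"
    unfolding jacobiP_def jc_def by (simp add: sum_distrib_left mult.assoc)
  also have "\<dots> = (\<Sum>k\<le>N. jc a b m k * ((1 - x) / 2) ^ k)"
  proof (rule sum.mono_neutral_left)
    show "\<forall>i\<in>{..N} - {..m}. jc a b m i * ((1 - x) / 2) ^ i = 0"
      by (auto simp: jc_def pochhammer_of_nat_eq_0_lemma)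
  qed (use assms in auto)
  finally show ?thesis .
qed

lemma deriv_usum:
  "((\<lambda>x. \<Sum>k\<le>N. c k * ((1 - x) / 2) ^ k) has_real_derivative
     (\<Sum>j<N. c (Suc j) * (- (real j + 1) / 2) * ((1 - x) / 2) ^ j)) (at x)"
proof (induction N)
  case 0
  then show ?case by simp
next
  case (Suc N)
  have "((\<lambda>x. c (Suc N) * ((1 - x) / 2) ^ Suc N) has_real_derivative
      c (Suc N) * (- (real N + 1) / 2) * ((1 - x) / 2) ^ N) (at x)"
  proof -
    have d: "((\<lambda>x. (1 - x) / 2) has_real_derivative (- 1 / 2)) (at x)"
      by (auto intro!: derivative_eq_intros)
    have "((\<lambda>x. c (Suc N) * ((1 - x) / 2) ^ Suc N) has_real_derivative
      c (Suc N) * ((1 + real N) * (- 1 / 2 * ((1 - x) / 2) ^ N))) (at x)"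
      by (rule DERIV_cmult, rule DERIV_power_Suc, rule d)
    then show ?thesis by (rule DERIV_cong) (simp add: algebra_simps)
  qed
  from DERIV_add[OF Suc.IH this] show ?case by simp
qed

lemma Q_deriv:
  fixes a b :: real and n :: nat
  assumes a: "a > -1" and b: "b > -1" and L0: "n \<le> 1 \<Longrightarrow> a + b + 1 \<noteq> 0"
  shows "((\<lambda>x. jacA a b (int n + 1) * jacobiP a b (int n + 1) x + jacB a b (int n) * jacobiP a b (int n) x
      + jacC a b (int n - 1) * jacobiP a b (int n - 1) x) has_real_derivative jacobiP a b (int n) t) (at t)"
proof (cases n)
  case 0
  have ab2: "a + b + 2 \<noteq> 0" using a b by linarith
  have L: "a + b + 1 \<noteq> 0" using L0 0 by simp
  have P1: "jacobiP a b 1 x = (a + 1) - (a + b + 2) * ((1 - x) / 2)" for x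
    using a by (simp add: jacobiP_def field_simps)
  have P0: "jacobiP a b 0 x = 1" for x by (simp add: jacobiP_def)
  have Pm: "jacobiP a b (-1) x = 0" for x by (simp add: jacobiP_def)
  have "((\<lambda>x. jacA a b 1 * ((a + 1) - (a + b + 2) * ((1 - x) / 2)) + jacB a b 0 * 1 + jacC a b (-1) * 0)
       has_real_derivative jacA a b 1 * ((a + b + 2) / 2)) (at t)"
    by (rule DERIV_cong, (auto intro!: derivative_eq_intros)[1]) (simp add: field_simps)
  moreover have "jacA a b 1 * ((a + b + 2) / 2) = 1"
  proof -
    have "jacA a b 1 = ((a + b + 1) * 2) / ((a + b + 1) * (a + b + 2))" by (simp add: jacA_def add.assoc mult.commute)
    also have "\<dots> = 2 / (a + b + 2)" by (rule nonzero_mult_divide_mult_cancel_left[OF L])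
    finally show ?thesis using ab2 by simp
  qed
  ultimately show ?thesis using 0 by (simp add: P1 P0 Pm)
next
  case (Suc m)
  define N where "N = Suc (Suc (Suc m))"
  define A where "A = jacA a b (int (Suc m) + 1)"
  define B where "B = jacB a b (int (Suc m))"
  define C where "C = jacC a b (int (Suc m) - 1)"
  have i: "int (Suc m) + 1 = int (Suc (Suc m))" "int (Suc m) - 1 = int m" by auto
  have Qe: "A * jacobiP a b (int (Suc (Suc m))) x + B * jacobiP a b (int (Suc m)) x + C * jacobiP a b (int m) x
      = (\<Sum>k\<le>N. (A * jc a b (Suc (Suc m)) k + B * jc a b (Suc m) k + C * jc a b m k) * ((1 - x) / 2) ^ k)" for x
  proof -
    have e1: "jacobiP a b (int (Suc (Suc m))) x = (\<Sum>k\<le>N. jc a b (Suc (Suc m)) k * ((1 - x) / 2) ^ k)"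
      by (rule jacobiP_jc) (simp add: N_def)
    have e2: "jacobiP a b (int (Suc m)) x = (\<Sum>k\<le>N. jc a b (Suc m) k * ((1 - x) / 2) ^ k)"
      by (rule jacobiP_jc) (simp add: N_def)
    have e3: "jacobiP a b (int m) x = (\<Sum>k\<le>N. jc a b m k * ((1 - x) / 2) ^ k)"
      by (rule jacobiP_jc) (simp add: N_def)
    show ?thesis unfolding e1 e2 e3
      by (simp add: sum_distrib_left sum.distrib distrib_right mult.assoc)
  qed
  have d1: "((\<lambda>x. \<Sum>k\<le>N. (A * jc a b (Suc (Suc m)) k + B * jc a b (Suc m) k + C * jc a b m k) * ((1 - x) / 2) ^ k)
     has_real_derivative (\<Sum>j<N. (A * jc a b (Suc (Suc m)) (Suc j) + B * jc a b (Suc m) (Suc j) + C * jc a b m (Suc j))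
        * (- (real j + 1) / 2) * ((1 - t) / 2) ^ j)) (at t)"
    by (rule deriv_usum)
  have q1: "(\<Sum>j<N. (A * jc a b (Suc (Suc m)) (Suc j) + B * jc a b (Suc m) (Suc j) + C * jc a b m (Suc j))
        * (- (real j + 1) / 2) * ((1 - t) / 2) ^ j) = (\<Sum>j<N. jc a b (Suc m) j * ((1 - t) / 2) ^ j)"
  proof (rule sum.cong[OF refl])
    fix j
    have "jc a b (Suc m) j = - (real j + 1) / 2 * (A * jc a b (Suc (Suc m)) (Suc j) + B * jc a b (Suc m) (Suc j) + C * jc a b m (Suc j))"
      unfolding A_def B_def C_def by (rule coef_rec[OF a b]) (use L0 Suc in auto)
    then show "(A * jc a b (Suc (Suc m)) (Suc j) + B * jc a b (Suc m) (Suc j) + C * jc a b m (Suc j))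
        * (- (real j + 1) / 2) * ((1 - t) / 2) ^ j = jc a b (Suc m) j * ((1 - t) / 2) ^ j"
      by (simp add: algebra_simps)
  qed
  have q2: "(\<Sum>j<N. jc a b (Suc m) j * ((1 - t) / 2) ^ j) = jacobiP a b (int (Suc m)) t"
  proof -
    have "{..<N} = {..Suc (Suc m)}" by (simp add: N_def lessThan_Suc_atMost)
    then show ?thesis by (simp only:) (rule jacobiP_jc[symmetric], simp)
  qed
  have D: "((\<lambda>x. \<Sum>k\<le>N. (A * jc a b (Suc (Suc m)) k + B * jc a b (Suc m) k + C * jc a b m k) * ((1 - x) / 2) ^ k)
     has_real_derivative jacobiP a b (int (Suc m)) t) (at t)"
    using d1 unfolding q1 q2 .
  show ?thesis
    unfolding Suc unfolding A_def[symmetric] B_def[symmetric] C_def[symmetric] unfolding i Qe by (rule D)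
qed



lemma jacobiP_m1:
  fixes a b :: real
  assumes a: "a > -1"
  shows "jacobiP a b (int m) (-1) = (-1) ^ m * pochhammer (b + 1) m / fact m"
proof -
  have cond: "a + real m \<noteq> of_nat j" if "j < m" for j
  proof -
    have "real j + 1 \<le> real m" using that by linarith
    then show ?thesis using a by linarith
  qed
  note V0 = Vandermonde_pochhammer_lemma[where a = "- (real m + a + b + 1)" and b = "a + real m" and n = m, OF cond]
  have e1: "- (- (real m + a + b + 1) + (a + real m)) = b + 1" by simp
  have e0: "- (- (real m + a + b + 1)) = real m + a + b + 1" by simp
  have e2: "a + real m - real m + 1 = a + 1" by simp
  have e3: "pochhammer (- (a + real m)) m = (-1) ^ m * pochhammer (a + 1) m"
    unfolding pochhammer_minus by simp
  have V: "(\<Sum>k\<in>{0..m}. pochhammer (real m + a + b + 1) k * pochhammer (- real m) k /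
      (fact k * pochhammer (a + 1) k)) = pochhammer (b + 1) m / ((-1) ^ m * pochhammer (a + 1) m)"
    using V0 unfolding e0 e1 e2 e3 by (simp only: of_nat_fact)
  have pa: "pochhammer (a + 1) m \<noteq> 0" using a by (auto simp: pochhammer_eq_0_iff)
  have "jacobiP a b (int m) (-1) = pochhammer (a + 1) m / fact m *
     (\<Sum>k\<in>{0..m}. pochhammer (real m + a + b + 1) k * pochhammer (- real m) k / (fact k * pochhammer (a + 1) k))"
    by (simp add: jacobiP_def atMost_atLeast0 mult.commute)
  also have "\<dots> = (-1) ^ m * pochhammer (b + 1) m / fact m"
  proof -
    define \<sigma> where "\<sigma> = ((-1::real) ^ m)"
    have s2: "\<sigma> * \<sigma> = 1" unfolding \<sigma>_def by (induct m) auto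
    have sn: "\<sigma> \<noteq> 0" using s2 by auto
    have "pochhammer (a + 1) m / fact m * (pochhammer (b + 1) m / (\<sigma> * pochhammer (a + 1) m))
        = (\<sigma> * \<sigma>) * pochhammer (b + 1) m / (\<sigma> * fact m)"
      using pa s2 by simp
    also have "\<dots> = \<sigma> * pochhammer (b + 1) m / fact m"
      using sn by simp
    finally show ?thesis unfolding V \<sigma>_def .
  qed
  finally show ?thesis .
qed

lemma PI2:
  fixes a b r :: real
  shows "b * (a+b+2*r) * (a+b+2*r+1) * (a+b+2*r+2) = (a+b+r+1) * (b+r+1) * (a+b+r) * (a+b+2*r)
     - (a-b) * (a+b+r) * (r+1) * (a+b+2*r+1) - (a+r) * (r+1) * r * (a+b+2*r+2)"
  by algebra

lemma S_id:
  fixes a b :: real and n :: nat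
  assumes a: "a > -1" and b: "b > -1" and L00: "n = 0 \<Longrightarrow> a + b \<noteq> 0" and L0: "n \<le> 1 \<Longrightarrow> a + b + 1 \<noteq> 0"
  shows "jacA a b (int n + 1) * jacobiP a b (int n + 1) (-1) + jacB a b (int n) * jacobiP a b (int n) (-1)
      + jacC a b (int n - 1) * jacobiP a b (int n - 1) (-1) = jacS a b n"
proof (cases n)
  case 0
  have ab2: "a + b + 2 \<noteq> 0" using a b by linarith
  have L: "a + b + 1 \<noteq> 0" using L0 0 by simp
  have ab: "a + b \<noteq> 0" using L00 0 by simp
  have jA: "jacA a b 1 = 2 / (a + b + 2)"
  proof -
    have "jacA a b 1 = ((a + b + 1) * 2) / ((a + b + 1) * (a + b + 2))" by (simp add: jacA_def add.assoc mult.commute)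
    also have "\<dots> = 2 / (a + b + 2)" by (rule nonzero_mult_divide_mult_cancel_left[OF L])
    finally show ?thesis .
  qed
  have P1: "jacobiP a b 1 (-1) = - (b + 1)"
    using a by (simp add: jacobiP_def field_simps)
  have P0: "jacobiP a b 0 (-1) = 1" by (simp add: jacobiP_def)
  have Pm: "jacobiP a b (-1) (-1) = 0" by (simp add: jacobiP_def)
  have jB: "jacB a b 0 = 2 * (a - b) / ((a + b) * (a + b + 2))" by (simp add: jacB_def)
  have jS: "jacS a b 0 = - 2 * b / (a + b)" by (simp add: jacS_def)
  define s where "s = a + b"
  define t where "t = s + 2"
  have sn: "s \<noteq> 0" "t \<noteq> 0" using ab ab2 by (simp_all add: s_def t_def add.assoc)
  have "2 / t * (- (b + 1)) + 2 * (s - 2 * b) / (s * t) = (- 2 * (b + 1) * s + 2 * (s - 2 * b)) / (s * t)"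
    using sn by (simp add: field_simps)
  also have "- 2 * (b + 1) * s + 2 * (s - 2 * b) = (- 2 * b) * t" unfolding t_def by algebra
  also have "(- 2 * b) * t / (s * t) = - 2 * b / s" using sn by simp
  finally have "2 / (s + 2) * (- (b + 1)) + 2 * (s - 2 * b) / (s * (s + 2)) = - 2 * b / s"
    unfolding t_def .
  then show ?thesis using 0 by (simp add: jA P1 P0 Pm jB jS s_def)
next
  case (Suc m)
  define r where "r = real (Suc m)"
  define V where "V = pochhammer (b + 1) m"
  define F0 where "F0 = (fact m :: real)"
  define \<sigma> where "\<sigma> = ((-1::real) ^ m)"
  define Ar where "Ar = a + r"
  define RL where "RL = a + b + r + 1"
  define R1 where "R1 = r + 1"
  define SR where "SR = a + b + r"
  define S0 where "S0 = a + b + 2 * r"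
  define S1 where "S1 = a + b + 2 * r + 1"
  define S2 where "S2 = a + b + 2 * r + 2"
  define AB where "AB = a - b"
  define Br where "Br = b + r"
  define Br1 where "Br1 = b + r + 1"
  have r1: "r \<ge> 1" by (simp add: r_def)
  have nz: "r \<noteq> 0" "RL \<noteq> 0" "R1 \<noteq> 0" "S0 \<noteq> 0" "S1 \<noteq> 0" "S2 \<noteq> 0" "F0 \<noteq> 0"
    using a b r1 unfolding RL_def R1_def S0_def S1_def S2_def F0_def by auto
  have nzSR: "SR \<noteq> 0"
  proof (cases "m = 0")
    case True then show ?thesis using L0 Suc by (simp add: SR_def r_def add.commute add.left_commute)
  next
    case False then have "r \<ge> 2" by (simp add: r_def)
    then show ?thesis using a b unfolding SR_def by linarith
  qed
  have i: "int (Suc m) + 1 = int (Suc (Suc m))" "int (Suc m) - 1 = int m" by auto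
  have P0: "jacobiP a b (int m) (-1) = \<sigma> * V / F0"
    unfolding jacobiP_m1[OF a] \<sigma>_def V_def F0_def ..
  have P1: "jacobiP a b (int (Suc m)) (-1) = - \<sigma> * (V * Br) / (r * F0)"
    unfolding jacobiP_m1[OF a] \<sigma>_def V_def F0_def Br_def r_def
    by (simp add: pochhammer_Suc algebra_simps)
  have P2: "jacobiP a b (int (Suc (Suc m))) (-1) = \<sigma> * (V * Br * Br1) / (R1 * (r * F0))"
    unfolding jacobiP_m1[OF a] \<sigma>_def V_def F0_def Br_def Br1_def r_def R1_def
    by (simp add: pochhammer_Suc algebra_simps)
  have jS: "jacS a b (Suc m) = 2 * \<sigma> * (b * V * Br) / (SR * (R1 * (r * F0)))"
  proof -
    have p0: "pochhammer b (Suc (Suc m)) = b * pochhammer (b + 1) (Suc m)" by (rule pochhammer_rec)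
    have q0: "pochhammer (b + 1) (Suc m) = V * Br"
      unfolding V_def Br_def r_def pochhammer_Suc by (simp add: algebra_simps)
    have p: "pochhammer b (Suc (Suc m)) = b * (V * Br)" unfolding p0 q0 ..
    have "pochhammer b (Suc m + 1) = b * (V * Br)" using p by simp
    then show ?thesis unfolding jacS_def \<sigma>_def SR_def R1_def r_def F0_def
      by (simp add: algebra_simps)
  qed
  have hA: "jacA a b (int (Suc m) + 1) = 2 * RL / (S1 * S2)"
    unfolding jacA_def RL_def S1_def S2_def r_def by (simp add: algebra_simps)
  have hB: "jacB a b (int (Suc m)) = 2 * AB / (S0 * S2)"
    unfolding jacB_def AB_def S0_def S2_def r_def by (simp add: algebra_simps)
  have hC: "jacC a b (int (Suc m) - 1) = - (2 * Ar * Br) / (SR * S0 * S1)"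
    unfolding jacC_def Ar_def Br_def SR_def S0_def S1_def r_def by (simp add: algebra_simps)
  have PIa: "b * S0 * S1 * S2 = RL * Br1 * SR * S0 - AB * SR * R1 * S1 - Ar * R1 * r * S2"
    unfolding S0_def S1_def S2_def RL_def Br1_def SR_def AB_def R1_def Ar_def
    using PI2[of a b r] by (simp add: algebra_simps)
  have "2 * RL / (S1 * S2) * (\<sigma> * (V * Br * Br1) / (R1 * (r * F0))) + 2 * AB / (S0 * S2) * (- \<sigma> * (V * Br) / (r * F0))
      + - (2 * Ar * Br) / (SR * S0 * S1) * (\<sigma> * V / F0)
      = 2 * \<sigma> * V * Br / F0 * ((RL * Br1 * SR * S0 - AB * SR * R1 * S1 - Ar * R1 * r * S2) / (SR * R1 * r * S0 * S1 * S2))"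
    using nz nzSR by (simp add: field_simps)
  also have "\<dots> = 2 * \<sigma> * V * Br / F0 * (b * S0 * S1 * S2 / (SR * R1 * r * S0 * S1 * S2))"
    unfolding PIa ..
  also have "\<dots> = 2 * \<sigma> * (b * V * Br) / (SR * (R1 * (r * F0)))"
    using nz nzSR by (simp add: field_simps)
  finally show ?thesis
    unfolding Suc i P0 P1 P2 jS hA[unfolded i] hB hC[unfolded i] .
qed



lemma jacobiP_poly: "\<exists>p. \<forall>x. jacobiP a b k x = poly p x"
proof (cases "k < 0")
  case True
  then show ?thesis by (intro exI[of _ 0]) (simp add: jacobiP_def)
next
  case False
  then obtain m where k: "k = int m" by (metis nonneg_int_cases not_less)
  define p where "p = (\<Sum>i\<le>m. smult (jc a b m i) ([:1/2, -1/2:] ^ i))"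
  have "jacobiP a b k x = poly p x" for x
    unfolding k jacobiP_jc[of m m, OF order_refl] p_def
    by (simp add: poly_sum diff_divide_distrib)
  then show ?thesis by blast
qed

lemma jacobiP_cont: "continuous_on UNIV (jacobiP a b k)"
proof -
  obtain p where p: "\<And>x. jacobiP a b k x = poly p x" using jacobiP_poly by blast
  have "jacobiP a b k = poly p" by (rule ext) (rule p)
  then show ?thesis by (simp add: continuous_on_poly)
qed

lemma jacobi_sum_poly: "\<exists>p. jacobi_sum a b c M = poly p"
proof -
  have "\<forall>m. \<exists>p. \<forall>x. jacobiP a b (int m) x = poly p x" using jacobiP_poly by blast
  then obtain P where P: "\<And>m x. jacobiP a b (int m) x = poly (P m) x" by metis
  have "jacobi_sum a b c M = poly (\<Sum>m\<le>M. smult (c m) (P m))"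
    by (rule ext) (simp add: jacobi_sum_def poly_sum P)
  then show ?thesis by blast
qed

lemma solveA:
  fixes A B C S x u v I F :: real
  assumes "A \<noteq> 0" "A * x + B * u + C * v = I + S * F"
  shows "x = 1 / A * I - B / A * u - C / A * v + S / A * F"
proof -
  have "x = (I + S * F - B * u - C * v) / A" using assms by (simp add: field_simps)
  then show ?thesis using assms(1) by (simp add: diff_divide_distrib add_divide_distrib)
qed

theorem theorem4p6:
  fixes \<alpha> \<beta> :: real and M n :: nat and a :: "nat \<Rightarrow> real" and y :: real
  assumes "\<alpha> > -1" and "\<beta> > -1"
    and "n = 0 \<Longrightarrow> \<alpha> + \<beta> \<noteq> 0"
    and "n \<le> 1 \<Longrightarrow> \<alpha> + \<beta> + 1 \<noteq> 0"
    and "y \<in> {-1..1}"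
  defines "f \<equiv> jacobi_sum \<alpha> \<beta> a M"
  shows "Rtilde \<alpha> \<beta> f (int n + 1) y =
      1 / jacA \<alpha> \<beta> (int n + 1) * integral {-1..y} (\<lambda>s. Rtilde \<alpha> \<beta> f (int n) s)
    - jacB \<alpha> \<beta> (int n) / jacA \<alpha> \<beta> (int n + 1) * Rtilde \<alpha> \<beta> f (int n) y
    - jacC \<alpha> \<beta> (int n - 1) / jacA \<alpha> \<beta> (int n + 1) * Rtilde \<alpha> \<beta> f (int n - 1) y
    + jacS \<alpha> \<beta> n / jacA \<alpha> \<beta> (int n + 1) * integral {-1..y} f"
proof -
  note a = assms(1) and b = assms(2) and L00 = assms(3) and L0 = assms(4) and y = assms(5)
  obtain p where fp: "f = poly p" using jacobi_sum_poly unfolding f_def by blast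
  define A where "A = jacA \<alpha> \<beta> (int n + 1)"
  define B where "B = jacB \<alpha> \<beta> (int n)"
  define C where "C = jacC \<alpha> \<beta> (int n - 1)"
  define S where "S = jacS \<alpha> \<beta> n"
  define P where "P k = jacobiP \<alpha> \<beta> k" for k
  define Q where "Q t = A * P (int n + 1) t + B * P (int n) t + C * P (int n - 1) t" for t
  define R where "R k = Rtilde \<alpha> \<beta> f k y" for k
  have dQ: "(Q has_real_derivative P (int n) t) (at t)" for t
    unfolding Q_def P_def A_def B_def C_def by (rule Q_deriv[OF a b L0])
  have Q1: "Q (-1) = S"
    unfolding Q_def P_def A_def B_def C_def S_def by (rule S_id[OF a b L00 L0])
  have cP: "continuous_on UNIV (P k)" for k unfolding P_def by (rule jacobiP_cont)
  have int: "(\<lambda>t. poly p (y - 1 - t) * P k t) integrable_on {-1..y}" for k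
    by (rule integrable_continuous_interval)
       (auto intro!: continuous_intros continuous_on_subset[OF cP])
  have ci: "(\<lambda>t. c * (poly p (y - 1 - t) * P k t)) integrable_on {-1..y}" for c k
    by (rule integrable_continuous_interval)
       (auto intro!: continuous_intros continuous_on_subset[OF cP])
  have lin: "integral {-1..y} (\<lambda>t. poly p (y - 1 - t) * Q t) = A * R (int n + 1) + B * R (int n) + C * R (int n - 1)"
  proof -
    have "integral {-1..y} (\<lambda>t. poly p (y - 1 - t) * Q t) =
        integral {-1..y} (\<lambda>t. A * (poly p (y - 1 - t) * P (int n + 1) t) + B * (poly p (y - 1 - t) * P (int n) t)
          + C * (poly p (y - 1 - t) * P (int n - 1) t))"
      unfolding Q_def by (simp add: algebra_simps)
    also have "\<dots> = A * integral {-1..y} (\<lambda>t. poly p (y - 1 - t) * P (int n + 1) t)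
        + B * integral {-1..y} (\<lambda>t. poly p (y - 1 - t) * P (int n) t)
        + C * integral {-1..y} (\<lambda>t. poly p (y - 1 - t) * P (int n - 1) t)"
      using ci by (simp add: integral_add integrable_add)
    finally show ?thesis unfolding R_def Rtilde_def fp P_def .
  qed
  note main = conv_main[OF dQ cP y, of p]
  have main2: "A * R (int n + 1) + B * R (int n) + C * R (int n - 1) =
      integral {-1..y} (\<lambda>s. Rtilde \<alpha> \<beta> f (int n) s) + S * integral {-1..y} f"
    using main unfolding lin Q1 unfolding Rtilde_def fp P_def .
  have An: "A \<noteq> 0"
  proof -
    have e: "A = 2 * (\<alpha> + \<beta> + real n + 1) / ((\<alpha> + \<beta> + 2 * real n + 1) * (\<alpha> + \<beta> + 2 * real n + 2))"
      unfolding A_def jacA_def by (simp add: algebra_simps)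
    have "\<alpha> + \<beta> + real n + 1 \<noteq> 0" "\<alpha> + \<beta> + 2 * real n + 1 \<noteq> 0" "\<alpha> + \<beta> + 2 * real n + 2 \<noteq> 0"
      using a b L0 by (cases "n = 0"; simp; linarith)+
    then show ?thesis unfolding e by simp
  qed
  show ?thesis
    unfolding A_def[symmetric] B_def[symmetric] C_def[symmetric] S_def[symmetric] R_def[symmetric]
    by (rule solveA[OF An main2])
qed

end
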